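(* Let $A$ and $B$ be C*-algebras, and let $\{A_\lambda\}_{\lambda\in\Lambda}$ and $\{B_{\lambda'}\}_{\lambda'\in\Lambda'}$ be $\sigma$-complete directed families of separable C*-subalgebras of $A$ and $B$ respectively, each with dense union. Let $\Phi\colon A\to B$ be a $*$-isomorphism. Then there exist clubs $\Lambda_0\subseteq\Lambda$ and $\Lambda_0'\subseteq\Lambda'$ and an order isomorphism $\phi\colon\Lambda_0\to\Lambda_0'$ such that $\Phi[A_\lambda]=B_{\phi(\lambda)}$ for all $\lambda\in\Lambda_0$. If $\Lambda=\Lambda'$, then one can take $\Lambda_0=\Lambda_0'$ and $\phi=\mathrm{id}$, i.e. there is a club $\Lambda_0\subseteq\Lambda$ with $\Phi[A_\lambda]=B_\lambda$ for all $\lambda\in\Lambda_0$.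
   Context: A directed set $\Lambda$ is $\sigma$-complete if every countable directed $Z\subseteq\Lambda$ has a supremum $\sup Z\in\Lambda$. A directed family $\{A_\lambda\}_{\lambda\in\Lambda}$ of subalgebras means $\lambda\preceq\mu$ iff $A_\lambda\subseteq A_\mu$ (so $\lambda\mapsto A_\lambda$ is injective); it is $\sigma$-complete if $\Lambda$ is $\sigma$-complete and for each countable directed $Z\subseteq\Lambda$, $A_{\sup Z}$ is the closure of $\bigcup_{\lambda\in Z}A_\lambda$. A subset $\Lambda_0\subseteq\Lambda$ is a club if it is closed (every countable directed $Z\subseteq\Lambda_0$ has $\sup Z\in\Lambda_0$) and cofinal (every $\lambda\in\Lambda$ is below some element of $\Lambda_0$). *)

theory Defs
  imports "HOL-Analysis.Analysis"
begin

class cstar_algebra = real_normed_algebra + banach +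
  fixes cscale :: "complex \<Rightarrow> 'a \<Rightarrow> 'a" (infixr "*\<^sub>C" 75)
    and adj :: "'a \<Rightarrow> 'a"
  assumes cscale_add_right: "a *\<^sub>C (x + y) = a *\<^sub>C x + a *\<^sub>C y"
    and cscale_add_left: "(a + b) *\<^sub>C x = a *\<^sub>C x + b *\<^sub>C x"
    and cscale_cscale: "a *\<^sub>C (b *\<^sub>C x) = (a * b) *\<^sub>C x"
    and cscale_one: "1 *\<^sub>C x = x"
    and cscale_of_real: "complex_of_real r *\<^sub>C x = r *\<^sub>R x"
    and cscale_mult_left: "(a *\<^sub>C x) * y = a *\<^sub>C (x * y)"
    and cscale_mult_right: "x * (a *\<^sub>C y) = a *\<^sub>C (x * y)"
    and norm_cscale: "norm (a *\<^sub>C x) = cmod a * norm x"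
    and adj_adj: "adj (adj x) = x"
    and adj_add: "adj (x + y) = adj x + adj y"
    and adj_cscale: "adj (a *\<^sub>C x) = cnj a *\<^sub>C adj x"
    and adj_mult: "adj (x * y) = adj y * adj x"
    and cstar_identity: "norm (adj x * x) = (norm x)\<^sup>2"

definition cstar_subalgebra :: "'a::cstar_algebra set \<Rightarrow> bool" where
  "cstar_subalgebra S \<longleftrightarrow> 0 \<in> S \<and> (\<forall>x\<in>S. \<forall>y\<in>S. x + y \<in> S \<and> x * y \<in> S)
     \<and> (\<forall>a x. x \<in> S \<longrightarrow> a *\<^sub>C x \<in> S) \<and> (\<forall>x\<in>S. adj x \<in> S) \<and> closed S"

definition separable_set :: "'a::metric_space set \<Rightarrow> bool" where
  "separable_set S \<longleftrightarrow> (\<exists>D. countable D \<and> D \<subseteq> S \<and> S \<subseteq> closure D)"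

definition star_isomorphism :: "('a::cstar_algebra \<Rightarrow> 'b::cstar_algebra) \<Rightarrow> bool" where
  "star_isomorphism f \<longleftrightarrow> bij f \<and> (\<forall>x y. f (x + y) = f x + f y)
     \<and> (\<forall>a x. f (a *\<^sub>C x) = a *\<^sub>C f x) \<and> (\<forall>x y. f (x * y) = f x * f y)
     \<and> (\<forall>x. f (adj x) = adj (f x))"

text \<open>Index set \<open>\<Lambda>\<close>, family \<open>F\<close>; the order is \<open>l \<preceq> m \<longleftrightarrow> F l \<subseteq> F m\<close>.\<close>

definition directed_by :: "('i \<Rightarrow> 'a set) \<Rightarrow> 'i set \<Rightarrow> bool" where
  "directed_by F Z \<longleftrightarrow> Z \<noteq> {} \<and> (\<forall>x\<in>Z. \<forall>y\<in>Z. \<exists>z\<in>Z. F x \<subseteq> F z \<and> F y \<subseteq> F z)"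

definition is_sup_by :: "('i \<Rightarrow> 'a set) \<Rightarrow> 'i set \<Rightarrow> 'i set \<Rightarrow> 'i \<Rightarrow> bool" where
  "is_sup_by F \<Lambda> Z s \<longleftrightarrow> s \<in> \<Lambda> \<and> (\<forall>z\<in>Z. F z \<subseteq> F s)
     \<and> (\<forall>u\<in>\<Lambda>. (\<forall>z\<in>Z. F z \<subseteq> F u) \<longrightarrow> F s \<subseteq> F u)"

definition sigma_complete_family :: "('i \<Rightarrow> 'a::topological_space set) \<Rightarrow> 'i set \<Rightarrow> bool" where
  "sigma_complete_family F \<Lambda> \<longleftrightarrow> inj_on F \<Lambda> \<and> directed_by F \<Lambda>
     \<and> (\<forall>Z. Z \<subseteq> \<Lambda> \<and> countable Z \<and> directed_by F Z \<longrightarrow>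
            (\<exists>s. is_sup_by F \<Lambda> Z s \<and> F s = closure (\<Union>(F ` Z))))"

definition club_by :: "('i \<Rightarrow> 'a set) \<Rightarrow> 'i set \<Rightarrow> 'i set \<Rightarrow> bool" where
  "club_by F \<Lambda> \<Lambda>0 \<longleftrightarrow> \<Lambda>0 \<subseteq> \<Lambda>
     \<and> (\<forall>Z. Z \<subseteq> \<Lambda>0 \<and> countable Z \<and> directed_by F Z \<longrightarrow> (\<exists>s\<in>\<Lambda>0. is_sup_by F \<Lambda> Z s))
     \<and> (\<forall>l\<in>\<Lambda>. \<exists>m\<in>\<Lambda>0. F l \<subseteq> F m)"

end

theory Submission
  imports Defs
begin


fun pw :: "'a::real_normed_algebra \<Rightarrow> nat \<Rightarrow> 'a" where
  "pw x 0 = x" | "pw x (Suc n) = x * pw x n"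

definition qinv :: "'a::real_normed_algebra \<Rightarrow> 'a \<Rightarrow> bool" where
  "qinv x y \<longleftrightarrow> x + y = x * y \<and> x + y = y * x"

lemma qinv_sym: "qinv x y \<Longrightarrow> qinv y x"
  by (auto simp: qinv_def add.commute)

lemma qinv_unique: assumes "qinv x y" "qinv x z" shows "y = z"
proof -
  have 1: "y * x = x + y" and 2: "x * z = x + z" using assms by (auto simp: qinv_def)
  have "(y*x)*z = y*(x*z)" by (simp add: mult.assoc)
  hence "(x+y)*z = y*(x+z)" by (simp add: 1 2)
  hence "x*z + y*z = y*x + y*z" by (simp add: algebra_simps)
  hence "x + z = x + y" by (simp add: 1 2)
  thus ?thesis by simp
qed

lemma pw_add: "pw x (a + b + 1) = pw x a * pw x b"
  by (induction a) (auto simp: mult.assoc)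

lemma pw_Suc': "pw x (Suc n) = pw x n * x"
  using pw_add[of x n 0] by simp

lemma norm_pw: "norm (pw x n) \<le> norm x ^ Suc n"
proof (induction n)
  case 0 then show ?case by simp
next
  case (Suc n)
  have "norm (pw x (Suc n)) \<le> norm x * norm (pw x n)" by (simp add: norm_mult_ineq)
  also have "\<dots> \<le> norm x * norm x ^ Suc n" by (rule mult_left_mono[OF Suc]) simp
  finally show ?case by simp
qed

lemma neumann:
  fixes x :: "'a::{real_normed_algebra,banach}"
  assumes "norm x < 1"
  shows "\<exists>y. qinv x y \<and> norm y \<le> norm x / (1 - norm x)"
proof -
  have g: "summable (\<lambda>n. norm x ^ Suc n)"
    using assms by (simp add: summable_geometric)
  have sn: "summable (\<lambda>n. norm (pw x n))"
    by (rule summable_comparison_test[OF _ g]) (use norm_pw in auto)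
  have s: "summable (pw x)" by (rule summable_norm_cancel[OF sn])
  define y where "y = - suminf (pw x)"
  have "x * suminf (pw x) = suminf (\<lambda>n. x * pw x n)" by (rule suminf_mult[OF s, symmetric])
  also have "\<dots> = suminf (\<lambda>n. pw x (Suc n))" by simp
  also have "\<dots> = suminf (pw x) - x" using suminf_split_head[OF s] by simp
  finally have a: "x * suminf (pw x) = suminf (pw x) - x" .
  have "suminf (pw x) * x = suminf (\<lambda>n. pw x n * x)" by (rule suminf_mult2[OF s])
  also have "\<dots> = suminf (\<lambda>n. pw x (Suc n))" by (simp only: pw_Suc')
  also have "\<dots> = suminf (pw x) - x" using suminf_split_head[OF s] by simp
  finally have b: "suminf (pw x) * x = suminf (pw x) - x" .
  have q: "qinv x y" unfolding qinv_def y_def using a b by (simp add: algebra_simps)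
  have "norm y \<le> (\<Sum>n. norm (pw x n))" unfolding y_def using summable_norm[OF sn] by simp
  also have "\<dots> \<le> (\<Sum>n. norm x ^ Suc n)" by (rule suminf_le[OF _ sn g]) (rule norm_pw)
  also have "\<dots> = norm x / (1 - norm x)"
  proof -
    have "(\<Sum>n. norm x ^ Suc n) = norm x * (\<Sum>n. norm x ^ n)"
      using suminf_mult[OF summable_geometric[of "norm x"]] assms by simp
    also have "\<dots> = norm x / (1 - norm x)" using suminf_geometric[of "norm x"] assms by simp
    finally show ?thesis .
  qed
  finally show ?thesis using q by blast
qed



lemma cscale_zero_left[simp]: "0 *\<^sub>C (x::'a::cstar_algebra) = 0"
proof -
  have "complex_of_real 0 *\<^sub>C x = 0 *\<^sub>R x" by (rule cscale_of_real)
  thus ?thesis by simp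
qed
lemma cscale_zero_right[simp]: "a *\<^sub>C (0::'a::cstar_algebra) = 0"
  using cscale_add_right[of a "0::'a" 0] by simp
lemma cscale_diff_left: "(a - b) *\<^sub>C (x::'a::cstar_algebra) = a *\<^sub>C x - b *\<^sub>C x"
  using cscale_add_left[of "a - b" b x] by (simp add: eq_diff_eq)
lemma cscale_diff_right: "a *\<^sub>C (x - y) = a *\<^sub>C x - a *\<^sub>C (y::'a::cstar_algebra)"
  using cscale_add_right[of a "x - y" y] by (simp add: eq_diff_eq)
lemma cscale_sum_left: "(\<Sum>k\<in>K. c k) *\<^sub>C (x::'a::cstar_algebra) = (\<Sum>k\<in>K. c k *\<^sub>C x)"
  by (induction K rule: infinite_finite_induct) (auto simp: cscale_add_left)
lemma cscale_sum_right: "a *\<^sub>C (\<Sum>k\<in>K. x k) = (\<Sum>k\<in>K. a *\<^sub>C (x k::'a::cstar_algebra))"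
  by (induction K rule: infinite_finite_induct) (auto simp: cscale_add_right)
lemma pw_cscale: "pw (c *\<^sub>C (x::'a::cstar_algebra)) n = (c ^ Suc n) *\<^sub>C pw x n"
proof (induction n)
  case 0 then show ?case by simp
next
  case (Suc n)
  have "pw (c *\<^sub>C x) (Suc n) = (c *\<^sub>C x) * ((c ^ Suc n) *\<^sub>C pw x n)" by (simp only: pw.simps Suc)
  also have "\<dots> = (c ^ Suc (Suc n)) *\<^sub>C pw x (Suc n)"
    by (simp only: cscale_mult_left cscale_mult_right cscale_cscale pw.simps power_Suc mult.commute)
  finally show ?case .
qed
lemma adj_pw: "adj h = h \<Longrightarrow> adj (pw h n) = pw (h::'a::cstar_algebra) n"
proof (induction n)
  case 0 then show ?case by simp
next
  case (Suc n)
  have "adj (pw h (Suc n)) = adj (pw h n) * adj h" by (simp only: pw.simps adj_mult)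
  also have "\<dots> = pw h n * h" using Suc by simp
  also have "\<dots> = pw h (Suc n)" by (rule pw_Suc'[symmetric])
  finally show ?case .
qed
lemma norm_selfadj_sq: "adj k = k \<Longrightarrow> norm (k * k) = (norm (k::'a::cstar_algebra))\<^sup>2"
  using cstar_identity[of k] by simp
lemma norm_pw2: assumes "adj h = h" shows "norm (pw (h::'a::cstar_algebra) (2^m - 1)) = norm h ^ (2^m)"
proof (induction m)
  case 0 then show ?case by simp
next
  case (Suc m)
  have p: "(1::nat) \<le> 2^m" by simp
  have e: "(2::nat)^Suc m - 1 = (2^m - 1) + (2^m - 1) + 1" by (simp only: power_Suc) (use p in arith)
  have "pw h (2^Suc m - 1) = pw h (2^m - 1) * pw h (2^m - 1)" by (simp only: e pw_add)
  hence "norm (pw h (2^Suc m - 1)) = (norm (pw h (2^m - 1)))\<^sup>2"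
    using norm_selfadj_sq[OF adj_pw[OF assms]] by simp
  also have "\<dots> = norm h ^ (2^Suc m)" using Suc by (simp add: power_mult[symmetric] mult.commute)
  finally show ?case .
qed
lemma norm_cscale_diff: "norm (a *\<^sub>C h - b *\<^sub>C h) = cmod (a - b) * norm (h::'a::cstar_algebra)"
  by (simp add: cscale_diff_left[symmetric] norm_cscale)


lemma resolvent_id:
  fixes X W y z :: "'a::real_normed_algebra"
  assumes "qinv X y" "qinv W z"
  shows "z - y = (X - W) - y * (X - W) - (X - W) * z + y * (X - W) * z"
proof -
  have 1: "y * X = X + y" and 2: "W * z = W + z" using assms by (auto simp: qinv_def)
  have 3: "y * X * z = X * z + y * z" by (subst 1) (simp add: distrib_right)
  have 4: "y * W * z = y * W + y * z" by (subst mult.assoc, subst 2) (simp add: distrib_left)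
  have "(X - W) - y * (X - W) - (X - W) * z + y * (X - W) * z
     = X - W - y * X + y * W - X * z + W * z + y * X * z - y * W * z"
    by (simp add: algebra_simps)
  also have "\<dots> = z - y" unfolding 1 2 3 4 by (simp add: algebra_simps)
  finally show ?thesis by simp
qed

lemma resolvent_bound:
  fixes h y z :: "'a::cstar_algebra"
  assumes "qinv (a *\<^sub>C h) y" "qinv (b *\<^sub>C h) z"
  shows "norm (z - y) \<le> cmod (a - b) * norm h * ((1 + norm y) * (1 + norm z))"
proof -
  define D where "D = a *\<^sub>C h - b *\<^sub>C h"
  have nD: "norm D = cmod (a - b) * norm h" unfolding D_def by (rule norm_cscale_diff)
  have eq: "z - y = D - y * D - D * z + y * D * z" unfolding D_def by (rule resolvent_id[OF assms])
  have "norm (D - y * D - D * z + y * D * z) \<le> norm (D - y * D - D * z) + norm (y * D * z)"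
    by (rule norm_triangle_ineq)
  moreover have "norm (D - y * D - D * z) \<le> norm (D - y * D) + norm (D * z)" by (rule norm_triangle_ineq4)
  moreover have "norm (D - y * D) \<le> norm D + norm (y * D)" by (rule norm_triangle_ineq4)
  ultimately have "norm (z - y) \<le> norm D + norm (y * D) + norm (D * z) + norm (y * D * z)"
    unfolding eq by linarith
  also have "\<dots> \<le> norm D + norm y * norm D + norm D * norm z + norm y * norm D * norm z"
    by (intro add_mono order_refl norm_mult_ineq order_trans[OF norm_mult_ineq] mult_right_mono) auto
  also have "\<dots> = norm D * ((1 + norm y) * (1 + norm z))" by (simp add: algebra_simps)
  finally show ?thesis by (simp add: nD)
qed

lemma G_cont:
  fixes h :: "'a::cstar_algebra"
  assumes G: "\<forall>\<mu>\<in>S. qinv (\<mu> *\<^sub>C h) (G \<mu>)"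
  shows "continuous_on S G"
  unfolding continuous_on_iff
proof (intro ballI allI impI)
  fix a e assume aS: "a \<in> S" and e: "(0::real) < e"
  define y where "y = G a"
  define K where "K = norm h * (1 + norm y) + 1"
  have K: "K \<ge> 1" unfolding K_def by simp
  define d where "d = min (1 / (2 * K)) (e / (K * (2 + 2 * norm y)))"
  have d: "d > 0" unfolding d_def using K e by (simp add: add_pos_nonneg)
  show "\<exists>d>0. \<forall>x'\<in>S. dist x' a < d \<longrightarrow> dist (G x') (G a) < e"
  proof (intro exI conjI ballI impI, fact d)
    fix b assume bS: "b \<in> S" and dba: "dist b a < d"
    define z where "z = G b"
    have qy: "qinv (a *\<^sub>C h) y" using G aS unfolding y_def by blast
    have qz: "qinv (b *\<^sub>C h) z" using G bS unfolding z_def by blast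
    define c where "c = cmod (a - b) * norm h * (1 + norm y)"
    have c0: "c \<ge> 0" unfolding c_def by simp
    have ab: "cmod (a - b) < d" using dba by (simp add: dist_norm norm_minus_commute)
    have cK: "c \<le> cmod (a - b) * K" unfolding c_def K_def by (simp add: algebra_simps)
    have "cmod (a - b) * K < d * K" using ab K by (intro mult_strict_right_mono) auto
    hence cK': "c < d * K" using cK by linarith
    have "d \<le> 1 / (2 * K)" unfolding d_def by simp
    hence "d * K \<le> 1 / (2 * K) * K" using K by (intro mult_right_mono) auto
    also have "\<dots> = 1/2" using K by simp
    finally have c2: "c < 1/2" using cK' by linarith
    have bnd: "norm (z - y) \<le> c * (1 + norm z)"
      using resolvent_bound[OF qy qz] unfolding c_def by (simp add: mult.assoc)
    have "norm z \<le> norm y + norm (z - y)" by (rule norm_triangle_sub)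
    hence "norm z \<le> norm y + c * (1 + norm z)" using bnd by simp
    moreover have "c * norm z \<le> 1/2 * norm z" using c2 by (intro mult_right_mono) auto
    ultimately have nz: "norm z \<le> 2 * norm y + 1" using c2 by (simp add: algebra_simps)
    have "c * (1 + norm z) \<le> c * (2 + 2 * norm y)" using nz c0 by (intro mult_left_mono) auto
    hence "norm (z - y) \<le> c * (2 + 2 * norm y)" using bnd by linarith
    also have "\<dots> < d * K * (2 + 2 * norm y)"
      using cK' by (intro mult_strict_right_mono) (auto intro: add_pos_nonneg)
    also have "\<dots> \<le> e"
    proof -
      have "d \<le> e / (K * (2 + 2 * norm y))" unfolding d_def by simp
      moreover have "K * (2 + 2 * norm y) > 0" using K by (intro mult_pos_pos) (auto intro: add_pos_nonneg)
      ultimately have "d * (K * (2 + 2 * norm y)) \<le> e" by (simp add: pos_le_divide_eq)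
      thus ?thesis by (simp add: mult.assoc)
    qed
    finally show "dist (G b) (G a) < e" unfolding dist_norm z_def y_def .
  qed
qed



definition rou :: "nat \<Rightarrow> complex" where "rou N = exp (2 * of_real pi * \<i> / of_nat N)"

lemma rou_pow: "rou N ^ j = exp (2 * of_real pi * \<i> * of_nat j / of_nat N)"
proof -
  have "rou N ^ j = exp (of_nat j * (2 * of_real pi * \<i> / of_nat N))"
    unfolding rou_def by (rule exp_of_nat_mult[symmetric])
  also have "of_nat j * (2 * of_real pi * \<i> / of_nat N) = 2 * of_real pi * \<i> * of_nat j / (of_nat N :: complex)"
    by simp
  finally show ?thesis by simp
qed

lemma rou_powN: "N > 0 \<Longrightarrow> (rou N ^ k) ^ N = 1"
  by (metis complex_root_unity neq0_conv power_mult mult.commute rou_pow)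

lemma norm_rou_pow: "cmod (rou N ^ k) = 1"
  unfolding rou_def norm_power by simp

lemma rou_sum0:
  assumes "0 < j" "j < N"
  shows "(\<Sum>k<N. (rou N ^ k) ^ j) = 0"
proof -
  have w: "(\<Sum>k<N. (rou N ^ k) ^ j) = (\<Sum>k<N. (rou N ^ j) ^ k)"
    by (simp add: power_mult[symmetric] mult.commute)
  have ne: "rou N ^ j \<noteq> 1"
  proof
    assume "rou N ^ j = 1"
    hence "exp (2 * of_real pi * \<i> * of_nat j / of_nat N) = exp (2 * of_real pi * \<i> * of_nat 0 / of_nat N)"
      by (simp add: rou_pow)
    hence "j mod N = 0 mod N" using assms by (subst (asm) complex_root_unity_eq) auto
    thus False using assms by simp
  qed
  have "(rou N ^ j) ^ N = 1" using assms rou_powN[of N j] by (simp add: power_mult[symmetric] mult.commute)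
  thus ?thesis unfolding w sum_gp_strict using ne by simp
qed

lemma geo_qinv:
  fixes z g :: "'a::real_normed_algebra"
  assumes "qinv z g"
  shows "g + pw z n - g * pw z n = - (\<Sum>j<n. pw z j)"
    and "pw z n + g - pw z n * g = - (\<Sum>j<n. pw z j)"
proof -
  have gz: "g * z = z + g" and zg: "z * g = z + g" using assms by (auto simp: qinv_def)
  show "g + pw z n - g * pw z n = - (\<Sum>j<n. pw z j)"
  proof (induction n)
    case 0 then show ?case by (simp add: gz)
  next
    case (Suc n)
    have "g * pw z (Suc n) = (g * z) * pw z n" by (simp add: mult.assoc)
    also have "\<dots> = pw z (Suc n) + g * pw z n" by (simp add: gz distrib_right)
    finally have e: "g * pw z (Suc n) = pw z (Suc n) + g * pw z n" .
    show ?case unfolding e sum.lessThan_Suc using Suc by (simp add: algebra_simps del: pw.simps)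
  qed
  show "pw z n + g - pw z n * g = - (\<Sum>j<n. pw z j)"
  proof (induction n)
    case 0 then show ?case by (simp add: zg)
  next
    case (Suc n)
    have "pw z (Suc n) * g = pw z n * (z * g)" by (simp only: pw_Suc' mult.assoc)
    also have "\<dots> = pw z (Suc n) + pw z n * g" by (simp only: zg distrib_left pw_Suc')
    finally have e: "pw z (Suc n) * g = pw z (Suc n) + pw z n * g" .
    show ?case unfolding e sum.lessThan_Suc using Suc by (simp add: algebra_simps del: pw.simps)
  qed
qed

lemma cscale_avg_const:
  assumes "N > 0" shows "(1 / of_nat N) *\<^sub>C (\<Sum>k<N. (X::'a::cstar_algebra)) = X"
proof -
  have "(\<Sum>k<N. X) = (\<Sum>k<N. (1::complex) *\<^sub>C X)" by (simp add: cscale_one)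
  also have "\<dots> = of_nat N *\<^sub>C X" by (simp add: cscale_sum_left[symmetric])
  finally show ?thesis using assms by (simp add: cscale_cscale cscale_one)
qed



lemma avg_qinv:
  fixes h :: "'a::cstar_algebra" and G :: "nat \<Rightarrow> 'a" and r :: complex
  assumes q: "\<forall>k<Suc n. qinv ((r * rou (Suc n) ^ k) *\<^sub>C h) (G k)"
  shows "qinv ((r ^ Suc n) *\<^sub>C pw h n) ((1 / of_nat (Suc n)) *\<^sub>C (\<Sum>k<Suc n. G k))"
proof -
  define N where "N = Suc n"
  define X where "X = (r ^ N) *\<^sub>C pw h n"
  define z where "z k = (r * rou N ^ k) *\<^sub>C h" for k
  define gb where "gb = (1 / of_nat N) *\<^sub>C (\<Sum>k<N. G k)"
  have N0: "N > 0" unfolding N_def by simp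
  have pwz: "pw (z k) j = ((r * rou N ^ k) ^ Suc j) *\<^sub>C pw h j" for k j
    unfolding z_def by (rule pw_cscale)
  have pwzn: "pw (z k) n = X" for k
  proof -
    have "(r * rou N ^ k) ^ Suc n = r ^ N * (rou N ^ k) ^ N" unfolding N_def by (simp add: power_mult_distrib)
    also have "\<dots> = r ^ N" using rou_powN[OF N0] by simp
    finally show ?thesis unfolding pwz X_def by simp
  qed
  have qk: "qinv (z k) (G k)" if "k < N" for k using q that unfolding z_def N_def by blast
  have inner0: "(\<Sum>k<N. pw (z k) j) = 0" if "j < n" for j
  proof -
    have "(\<Sum>k<N. pw (z k) j) = (\<Sum>k<N. ((r * rou N ^ k) ^ Suc j)) *\<^sub>C pw h j"
      unfolding pwz by (simp add: cscale_sum_left)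
    also have "(\<Sum>k<N. ((r * rou N ^ k) ^ Suc j)) = r ^ Suc j * (\<Sum>k<N. (rou N ^ k) ^ Suc j)"
      by (simp only: power_mult_distrib sum_distrib_left)
    also have "(\<Sum>k<N. (rou N ^ k) ^ Suc j) = 0" using that unfolding N_def by (intro rou_sum0) auto
    finally show ?thesis by simp
  qed
  have tot0: "(\<Sum>k<N. (\<Sum>j<n. pw (z k) j)) = 0"
    by (subst sum.swap) (simp add: inner0)
  have A: "(\<Sum>k<N. G k + X - G k * X) = 0"
  proof -
    have "(\<Sum>k<N. G k + X - G k * X) = (\<Sum>k<N. - (\<Sum>j<n. pw (z k) j))"
      using geo_qinv(1)[OF qk, of _ n] by (intro sum.cong) (auto simp: pwzn)
    thus ?thesis using tot0 by (simp add: sum_negf)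
  qed
  have B: "(\<Sum>k<N. X + G k - X * G k) = 0"
  proof -
    have "(\<Sum>k<N. X + G k - X * G k) = (\<Sum>k<N. - (\<Sum>j<n. pw (z k) j))"
      using geo_qinv(2)[OF qk, of _ n] by (intro sum.cong) (auto simp: pwzn)
    thus ?thesis using tot0 by (simp add: sum_negf)
  qed
  have cA: "gb + X - gb * X = (1 / of_nat N) *\<^sub>C (\<Sum>k<N. G k + X - G k * X)"
    unfolding gb_def sum.distrib sum_subtractf sum_distrib_right[symmetric]
    by (simp add: cscale_add_right cscale_diff_right cscale_mult_left cscale_avg_const[OF N0])
  have cB: "X + gb - X * gb = (1 / of_nat N) *\<^sub>C (\<Sum>k<N. X + G k - X * G k)"
    unfolding gb_def sum.distrib sum_subtractf sum_distrib_left[symmetric]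
    by (simp add: cscale_add_right cscale_diff_right cscale_mult_right cscale_avg_const[OF N0])
  have "gb + X - gb * X = 0" using cA A by simp
  moreover have "X + gb - X * gb = 0" using cB B by simp
  ultimately have "qinv X gb" unfolding qinv_def by (simp add: algebra_simps eq_diff_eq)
  thus ?thesis unfolding X_def gb_def N_def .
qed



lemma neumann_small:
  fixes x :: "'a::cstar_algebra"
  assumes "norm x \<le> c" "c < 1" "qinv x y"
  shows "norm y \<le> c / (1 - c)"
proof -
  have "norm x < 1" using assms by simp
  then obtain y' where y': "qinv x y'" "norm y' \<le> norm x / (1 - norm x)" using neumann by blast
  have "y = y'" using qinv_unique[OF assms(3) y'(1)] .
  moreover have "norm x / (1 - norm x) \<le> c / (1 - c)"
  proof -
    have c0: "0 \<le> c" using assms(1) norm_ge_zero[of x] by linarith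
    show ?thesis using assms c0 by (intro frac_le) auto
  qed
  ultimately show ?thesis using y' by simp
qed

lemma spec_lemma:
  fixes h :: "'a::cstar_algebra"
  assumes sa: "adj h = h" and hpos: "norm h > 0" and R: "R * norm h > 1"
    and qi: "\<forall>\<mu>. cmod \<mu> \<le> R \<longrightarrow> (\<exists>y. qinv (\<mu> *\<^sub>C h) y)"
  shows False
proof -
  define \<rho> where "\<rho> = norm h"
  have \<rho>: "\<rho> > 0" using hpos unfolding \<rho>_def .
  have R1: "R > 1 / \<rho>" using R \<rho> unfolding \<rho>_def by (simp add: divide_less_eq mult.commute)
  define G where "G \<mu> = (SOME y. qinv (\<mu> *\<^sub>C h) y)" for \<mu>
  have Gq: "qinv (\<mu> *\<^sub>C h) (G \<mu>)" if "cmod \<mu> \<le> R" for \<mu>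
    unfolding G_def using qi that by (metis someI_ex)
  have "continuous_on (cball 0 R) G"
    by (rule G_cont) (auto intro: Gq)
  hence "uniformly_continuous_on (cball 0 R) G" by (intro compact_uniformly_continuous) auto
  moreover have "(1/4::real) > 0" by simp
  ultimately obtain d where d: "d > 0"
    and dU: "\<forall>x\<in>cball 0 R. \<forall>x'\<in>cball 0 R. dist x' x < d \<longrightarrow> dist (G x') (G x) < 1/4"
    unfolding uniformly_continuous_on_def by blast
  define t where "t = min (d/2) (min (R - 1/\<rho>) (1/\<rho>))"
  have t: "t > 0" "t \<le> d/2" "t \<le> R - 1/\<rho>" "t \<le> 1/\<rho>" unfolding t_def using d R1 \<rho> by (simp_all add: min_def)
  define r1 where "r1 = 1/\<rho> - t/2"
  define r2 where "r2 = 1/\<rho> + t/2"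
  have ir: "1/\<rho> > 0" using \<rho> by simp
  have r1a: "r1 > 0" "r1 \<le> R" "r1 < 1/\<rho>" unfolding r1_def using t ir R1 by linarith+
  have "r1 * \<rho> < 1/\<rho> * \<rho>" using r1a \<rho> by (intro mult_strict_right_mono) auto
  hence r1: "r1 > 0" "r1 \<le> R" "r1 * \<rho> < 1" using r1a \<rho> by auto
  have r2a: "r2 > 0" "r2 \<le> R" "r2 > 1/\<rho>" unfolding r2_def using t ir R1 by linarith+
  have "r2 * \<rho> > 1/\<rho> * \<rho>" using r2a \<rho> by (intro mult_strict_right_mono) auto
  hence r2: "r2 > 0" "r2 \<le> R" "r2 * \<rho> > 1" using r2a \<rho> by auto
  have r21: "r2 - r1 < d" unfolding r1_def r2_def using t d by simp
  obtain N0 where N0: "(r1 * \<rho>) ^ N0 < 1/5" using real_arch_pow_inv[of "1/5" "r1 * \<rho>"] r1 by auto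
  define m where "m = N0"
  define N :: nat where "N = 2 ^ m"
  have NN0: "N \<ge> N0" unfolding N_def m_def by (simp add: less_imp_le)
  have N1: "N \<ge> 1" unfolding N_def by simp
  define n where "n = N - 1"
  have Nn: "Suc n = N" unfolding n_def using N1 by simp
  have pwn: "norm (pw h n) = \<rho> ^ N" unfolding n_def N_def \<rho>_def by (rule norm_pw2[OF sa])
  define gb where "gb r = (1 / of_nat N) *\<^sub>C (\<Sum>k<N. G (complex_of_real r * rou N ^ k))" for r
  have gbq: "qinv ((complex_of_real r ^ N) *\<^sub>C pw h n) (gb r)" if "0 \<le> r" "r \<le> R" for r
  proof -
    have "\<forall>k<Suc n. qinv ((complex_of_real r * rou (Suc n) ^ k) *\<^sub>C h) (G (complex_of_real r * rou (Suc n) ^ k))"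
      using that by (auto intro!: Gq simp: norm_mult norm_rou_pow)
    from avg_qinv[OF this] show ?thesis unfolding gb_def Nn .
  qed
  have nX: "norm ((complex_of_real r ^ N) *\<^sub>C pw h n) = (r * \<rho>) ^ N" if "0 \<le> r" for r
    using that by (simp add: norm_cscale norm_power pwn power_mult_distrib)
  have "(r1 * \<rho>) ^ N \<le> (r1 * \<rho>) ^ N0"
    using r1 \<rho> NN0 by (intro power_decreasing) auto
  hence s1: "norm ((complex_of_real r1 ^ N) *\<^sub>C pw h n) \<le> 1/5" using N0 nX[of r1] r1 by simp
  have g1: "norm (gb r1) \<le> 1/4"
    using neumann_small[OF s1 _ gbq[of r1]] r1 by simp
  have "gb r2 - gb r1 = (1 / of_nat N) *\<^sub>C (\<Sum>k<N. G (complex_of_real r2 * rou N ^ k) - G (complex_of_real r1 * rou N ^ k))"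
    unfolding gb_def by (simp add: sum_subtractf cscale_diff_right)
  hence "norm (gb r2 - gb r1) = (1 / real N) * norm (\<Sum>k<N. G (complex_of_real r2 * rou N ^ k) - G (complex_of_real r1 * rou N ^ k))"
    by (simp add: norm_cscale norm_divide)
  also have "\<dots> \<le> (1 / real N) * (\<Sum>k<N. norm (G (complex_of_real r2 * rou N ^ k) - G (complex_of_real r1 * rou N ^ k)))"
    by (intro mult_left_mono norm_sum) auto
  also have "\<dots> \<le> (1 / real N) * (\<Sum>k<N. 1/4)"
  proof (intro mult_left_mono sum_mono)
    fix k assume "k \<in> {..<N}"
    have in1: "complex_of_real r1 * rou N ^ k \<in> cball 0 R" using r1 by (simp add: norm_mult norm_rou_pow)
    have in2: "complex_of_real r2 * rou N ^ k \<in> cball 0 R" using r2 by (simp add: norm_mult norm_rou_pow)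
    have "dist (complex_of_real r2 * rou N ^ k) (complex_of_real r1 * rou N ^ k) = r2 - r1"
    proof -
      have "dist (complex_of_real r2 * rou N ^ k) (complex_of_real r1 * rou N ^ k)
           = cmod ((complex_of_real (r2 - r1)) * rou N ^ k)" by (simp add: dist_norm algebra_simps)
      also have "\<dots> = r2 - r1" using r1 r2 r21 unfolding r1_def r2_def using t
        by (simp add: norm_mult norm_rou_pow)
      finally show ?thesis .
    qed
    hence "dist (complex_of_real r2 * rou N ^ k) (complex_of_real r1 * rou N ^ k) < d" using r21 by simp
    thus "norm (G (complex_of_real r2 * rou N ^ k) - G (complex_of_real r1 * rou N ^ k)) \<le> 1/4"
    proof -
      have "dist (G (complex_of_real r2 * rou N ^ k)) (G (complex_of_real r1 * rou N ^ k)) < 1/4"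
        using dU in1 in2 \<open>dist _ _ < d\<close> by blast
      thus ?thesis by (simp add: dist_norm)
    qed
  qed simp
  also have "\<dots> = 1/4" using N1 by simp
  finally have "norm (gb r2 - gb r1) \<le> 1/4" .
  hence g2: "norm (gb r2) \<le> 1/2" using g1 norm_triangle_sub[of "gb r2" "gb r1"] by simp
  have "norm ((complex_of_real r2 ^ N) *\<^sub>C pw h n) \<le> (1/2) / (1 - 1/2)"
    using neumann_small[OF g2 _ qinv_sym[OF gbq[of r2]]] r2 by simp
  hence "(r2 * \<rho>) ^ N \<le> 1" using nX[of r2] r2 by simp
  moreover have "(r2 * \<rho>) ^ N > 1" using r2 N1 by (intro one_less_power) auto
  ultimately show False by simp
qed



lemma star_qinv:
  assumes "star_isomorphism \<Phi>" "qinv x y" shows "qinv (\<Phi> x) (\<Phi> y)"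
proof -
  have a: "\<Phi> (x + y) = \<Phi> x + \<Phi> y" and m: "\<And>u v. \<Phi> (u * v) = \<Phi> u * \<Phi> v"
    using assms(1) unfolding star_isomorphism_def by auto
  have "x + y = x * y" "x + y = y * x" using assms(2) unfolding qinv_def by auto
  hence "\<Phi> x + \<Phi> y = \<Phi> x * \<Phi> y" "\<Phi> x + \<Phi> y = \<Phi> y * \<Phi> x" using a m by metis+
  thus ?thesis unfolding qinv_def by simp
qed

lemma star_contr:
  fixes \<Phi> :: "'a::cstar_algebra \<Rightarrow> 'b::cstar_algebra"
  assumes iso: "star_isomorphism \<Phi>" shows "norm (\<Phi> x) \<le> norm x"
proof (rule ccontr)
  assume "\<not> norm (\<Phi> x) \<le> norm x"
  hence lt: "norm x < norm (\<Phi> x)" by simp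
  define a where "a = adj x * x"
  define b where "b = adj (\<Phi> x) * \<Phi> x"
  have ba: "b = \<Phi> a" using iso unfolding star_isomorphism_def a_def b_def by simp
  have na: "norm a = (norm x)\<^sup>2" unfolding a_def by (rule cstar_identity)
  have nb: "norm b = (norm (\<Phi> x))\<^sup>2" unfolding b_def by (rule cstar_identity)
  have nab: "norm a < norm b" unfolding na nb using lt by (simp add: power_strict_mono)
  have sab: "adj b = b" unfolding b_def by (simp add: adj_mult adj_adj)
  define R where "R = 2 / (norm a + norm b)"
  have pos: "norm a + norm b > 0" using nab norm_ge_zero[of a] by linarith
  have Rb: "R * norm b > 1" unfolding R_def using pos nab by (simp add: field_simps)
  have Ra: "R * norm a < 1" unfolding R_def using pos nab by (simp add: field_simps)
  have R0: "R \<ge> 0" unfolding R_def using pos by simp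
  have "\<forall>\<mu>. cmod \<mu> \<le> R \<longrightarrow> (\<exists>y. qinv (\<mu> *\<^sub>C b) y)"
  proof (intro allI impI)
    fix \<mu> :: complex assume m: "cmod \<mu> \<le> R"
    have "norm (\<mu> *\<^sub>C a) = cmod \<mu> * norm a" by (rule norm_cscale)
    also have "\<dots> \<le> R * norm a" using m by (intro mult_right_mono) auto
    finally have "norm (\<mu> *\<^sub>C a) < 1" using Ra by linarith
    then obtain y where "qinv (\<mu> *\<^sub>C a) y" using neumann by blast
    hence "qinv (\<Phi> (\<mu> *\<^sub>C a)) (\<Phi> y)" by (rule star_qinv[OF iso])
    moreover have "\<Phi> (\<mu> *\<^sub>C a) = \<mu> *\<^sub>C b" using iso ba unfolding star_isomorphism_def by simp
    ultimately show "\<exists>y. qinv (\<mu> *\<^sub>C b) y" by auto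
  qed
  moreover have "norm b > 0" using nab norm_ge_zero[of a] by linarith
  ultimately show False using spec_lemma[OF sab _ Rb] by blast
qed

lemma star_inv:
  assumes iso: "star_isomorphism \<Phi>" shows "star_isomorphism (inv \<Phi>)"
proof -
  have b: "bij \<Phi>" using iso unfolding star_isomorphism_def by simp
  have l: "inv \<Phi> (\<Phi> x) = x" for x using b by (simp add: bij_is_inj)
  have r: "\<Phi> (inv \<Phi> y) = y" for y using b by (simp add: bij_is_surj surj_f_inv_f)
  have add: "\<Phi> (u + v) = \<Phi> u + \<Phi> v" and sc: "\<Phi> (a *\<^sub>C u) = a *\<^sub>C \<Phi> u"
    and mu: "\<Phi> (u * v) = \<Phi> u * \<Phi> v" and ad: "\<Phi> (adj u) = adj (\<Phi> u)" for u v a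
    using iso unfolding star_isomorphism_def by auto
  have "inv \<Phi> (x + y) = inv \<Phi> x + inv \<Phi> y" for x y
  proof -
    have "\<Phi> (inv \<Phi> x + inv \<Phi> y) = x + y" by (simp add: add r)
    hence "inv \<Phi> (\<Phi> (inv \<Phi> x + inv \<Phi> y)) = inv \<Phi> (x + y)" by simp
    thus ?thesis by (simp add: l)
  qed
  moreover have "inv \<Phi> (a *\<^sub>C x) = a *\<^sub>C inv \<Phi> x" for a x
  proof -
    have "\<Phi> (a *\<^sub>C inv \<Phi> x) = a *\<^sub>C x" by (simp add: sc r)
    hence "inv \<Phi> (\<Phi> (a *\<^sub>C inv \<Phi> x)) = inv \<Phi> (a *\<^sub>C x)" by simp
    thus ?thesis by (simp add: l)
  qed
  moreover have "inv \<Phi> (x * y) = inv \<Phi> x * inv \<Phi> y" for x y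
  proof -
    have "\<Phi> (inv \<Phi> x * inv \<Phi> y) = x * y" by (simp add: mu r)
    hence "inv \<Phi> (\<Phi> (inv \<Phi> x * inv \<Phi> y)) = inv \<Phi> (x * y)" by simp
    thus ?thesis by (simp add: l)
  qed
  moreover have "inv \<Phi> (adj x) = adj (inv \<Phi> x)" for x
  proof -
    have "\<Phi> (adj (inv \<Phi> x)) = adj x" by (simp add: ad r)
    hence "inv \<Phi> (\<Phi> (adj (inv \<Phi> x))) = inv \<Phi> (adj x)" by simp
    thus ?thesis by (simp add: l)
  qed
  ultimately show ?thesis unfolding star_isomorphism_def using bij_imp_bij_inv[OF b] by blast
qed

lemma star_isometry:
  fixes \<Phi> :: "'a::cstar_algebra \<Rightarrow> 'b::cstar_algebra"
  assumes iso: "star_isomorphism \<Phi>" shows "norm (\<Phi> x) = norm x"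
proof -
  have b: "bij \<Phi>" using iso unfolding star_isomorphism_def by simp
  have "norm (inv \<Phi> (\<Phi> x)) \<le> norm (\<Phi> x)" by (rule star_contr[OF star_inv[OF iso]])
  hence "norm x \<le> norm (\<Phi> x)" using b by (simp add: bij_is_inj)
  thus ?thesis using star_contr[OF iso, of x] by simp
qed

lemma star_diff: "star_isomorphism \<Phi> \<Longrightarrow> \<Phi> (x - y) = \<Phi> x - \<Phi> y"
proof -
  assume "star_isomorphism \<Phi>"
  hence "\<Phi> (x - y) + \<Phi> y = \<Phi> x" unfolding star_isomorphism_def by (metis diff_add_cancel)
  thus ?thesis by (simp add: eq_diff_eq)
qed

lemma star_cont:
  fixes \<Phi> :: "'a::cstar_algebra \<Rightarrow> 'b::cstar_algebra"
  assumes iso: "star_isomorphism \<Phi>" shows "continuous_on UNIV \<Phi>"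
  unfolding continuous_on_iff
proof (intro ballI allI impI)
  fix x and e :: real assume "0 < e"
  thus "\<exists>d>0. \<forall>x'\<in>UNIV. dist x' x < d \<longrightarrow> dist (\<Phi> x') (\<Phi> x) < e"
    by (intro exI[of _ e]) (simp add: dist_norm star_diff[OF iso, symmetric] star_isometry[OF iso])
qed

lemma star_closure:
  fixes \<Phi> :: "'a::cstar_algebra \<Rightarrow> 'b::cstar_algebra"
  assumes iso: "star_isomorphism \<Phi>" shows "\<Phi> ` closure S = closure (\<Phi> ` S)"
proof
  show "\<Phi> ` closure S \<subseteq> closure (\<Phi> ` S)"
    by (rule image_closure_subset[OF continuous_on_subset[OF star_cont[OF iso]]]) (auto intro: closure_subset[THEN subsetD])
  have b: "bij \<Phi>" using iso unfolding star_isomorphism_def by simp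
  have "inv \<Phi> ` closure (\<Phi> ` S) \<subseteq> closure (inv \<Phi> ` \<Phi> ` S)"
    by (rule image_closure_subset[OF continuous_on_subset[OF star_cont[OF star_inv[OF iso]]]]) (auto intro: closure_subset[THEN subsetD])
  also have "inv \<Phi> ` \<Phi> ` S = S" using b by (simp add: bij_is_inj image_comp)
  finally have "\<Phi> ` inv \<Phi> ` closure (\<Phi> ` S) \<subseteq> \<Phi> ` closure S" by blast
  moreover have "\<Phi> ` inv \<Phi> ` closure (\<Phi> ` S) = closure (\<Phi> ` S)"
    using b by (simp add: bij_is_surj image_comp surj_iff comp_def surj_f_inv_f)
  ultimately show "closure (\<Phi> ` S) \<subseteq> \<Phi> ` closure S" by simp
qed



lemma sc_sup: "sigma_complete_family F \<Lambda> \<Longrightarrow> Z \<subseteq> \<Lambda> \<Longrightarrow> countable Z \<Longrightarrow> directed_by F Z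
  \<Longrightarrow> \<exists>s. is_sup_by F \<Lambda> Z s \<and> F s = closure (\<Union>(F ` Z))"
  unfolding sigma_complete_family_def by blast
lemma sc_dir: "sigma_complete_family F \<Lambda> \<Longrightarrow> directed_by F \<Lambda>"
  unfolding sigma_complete_family_def by blast
lemma sc_inj: "sigma_complete_family F \<Lambda> \<Longrightarrow> inj_on F \<Lambda>"
  unfolding sigma_complete_family_def by blast

lemma dir_closure:
  assumes dir: "directed_by F \<Lambda>" and cI: "countable I" and IL: "I \<subseteq> \<Lambda>" and I0: "I \<noteq> {}"
  shows "\<exists>Z. I \<subseteq> Z \<and> Z \<subseteq> \<Lambda> \<and> countable Z \<and> directed_by F Z"
proof -
  define ub where "ub x y = (SOME z. z \<in> \<Lambda> \<and> F x \<subseteq> F z \<and> F y \<subseteq> F z)" for x y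
  have ub: "ub x y \<in> \<Lambda> \<and> F x \<subseteq> F (ub x y) \<and> F y \<subseteq> F (ub x y)" if "x \<in> \<Lambda>" "y \<in> \<Lambda>" for x y
  proof -
    have "\<exists>z. z \<in> \<Lambda> \<and> F x \<subseteq> F z \<and> F y \<subseteq> F z" using dir that unfolding directed_by_def by blast
    thus ?thesis unfolding ub_def by (rule someI_ex)
  qed
  define Zs where "Zs = rec_nat I (\<lambda>n Y. Y \<union> (\<lambda>p. ub (fst p) (snd p)) ` (Y \<times> Y))"
  have Z0: "Zs 0 = I" and ZS: "Zs (Suc n) = Zs n \<union> (\<lambda>p. ub (fst p) (snd p)) ` (Zs n \<times> Zs n)" for n
    unfolding Zs_def by simp_all
  have ZL: "Zs n \<subseteq> \<Lambda>" for n
  proof (induction n)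
    case 0 then show ?case using IL Z0 by simp
  next
    case (Suc n)
    have "\<And>a b. a \<in> Zs n \<Longrightarrow> b \<in> Zs n \<Longrightarrow> ub a b \<in> \<Lambda>" using Suc ub by blast
    thus ?case unfolding ZS using Suc by auto
  qed
  have Zc: "countable (Zs n)" for n
  proof (induction n)
    case 0 then show ?case using cI Z0 by simp
  next
    case (Suc n) then show ?case unfolding ZS by auto
  qed
  have Zm: "Zs n \<subseteq> Zs m" if "n \<le> m" for n m
    using lift_Suc_mono_le[of Zs, OF _ that] ZS by blast
  define Z where "Z = (\<Union>n. Zs n)"
  have "directed_by F Z"
    unfolding directed_by_def
  proof (intro conjI ballI)
    show "Z \<noteq> {}" using I0 Z0 unfolding Z_def by auto
  next
    fix x y assume "x \<in> Z" "y \<in> Z"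
    then obtain i j where i: "x \<in> Zs i" and j: "y \<in> Zs j" unfolding Z_def by blast
    have xi: "x \<in> Zs (max i j)" "y \<in> Zs (max i j)" using Zm[of i "max i j"] Zm[of j "max i j"] i j by auto
    hence "ub x y \<in> Zs (Suc (max i j))" unfolding ZS by (intro UnI2 image_eqI[of _ _ "(x,y)"]) auto
    moreover have "F x \<subseteq> F (ub x y) \<and> F y \<subseteq> F (ub x y)" using ub xi ZL by blast
    ultimately show "\<exists>z\<in>Z. F x \<subseteq> F z \<and> F y \<subseteq> F z" unfolding Z_def by blast
  qed
  moreover have "I \<subseteq> Z" using Z0 unfolding Z_def by auto
  moreover have "Z \<subseteq> \<Lambda>" using ZL unfolding Z_def by auto
  moreover have "countable Z" using Zc unfolding Z_def by auto
  ultimately show ?thesis by blast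
qed

lemma cover_countable:
  fixes F :: "'i \<Rightarrow> 'a::metric_space set"
  assumes sc: "sigma_complete_family F \<Lambda>" and dense: "closure (\<Union>(F ` \<Lambda>)) = UNIV"
    and cD: "countable D" and l0: "l0 \<in> \<Lambda>"
  shows "\<exists>s\<in>\<Lambda>. F l0 \<subseteq> F s \<and> D \<subseteq> F s"
proof -
  have ex1: "\<exists>u. (\<forall>n. u n \<in> \<Union>(F ` \<Lambda>)) \<and> u \<longlonglongrightarrow> d" for d
  proof -
    have "d \<in> closure (\<Union>(F ` \<Lambda>))" using dense by simp
    thus ?thesis unfolding closure_sequential .
  qed
  have ex: "\<forall>d. \<exists>u. (\<forall>n. u n \<in> \<Union>(F ` \<Lambda>)) \<and> u \<longlonglongrightarrow> d" using ex1 by blast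
  obtain u where uu: "\<forall>d. (\<forall>n. u d n \<in> \<Union>(F ` \<Lambda>)) \<and> u d \<longlonglongrightarrow> d"
    using choice[OF ex] by blast
  have u: "u d n \<in> \<Union>(F ` \<Lambda>)" and ul: "u d \<longlonglongrightarrow> d" for d n using uu by auto
  define i where "i d n = (SOME i. i \<in> \<Lambda> \<and> u d n \<in> F i)" for d n
  have i_ex: "\<exists>i. i \<in> \<Lambda> \<and> u d n \<in> F i" for d n using u[of d n] by blast
  have i: "i d n \<in> \<Lambda>" and ui: "u d n \<in> F (i d n)" for d n
    using someI_ex[OF i_ex[of d n]] unfolding i_def by auto
  define I where "I = insert l0 (\<Union>d\<in>D. range (i d))"
  have cI: "countable I" unfolding I_def using cD by auto
  have IL: "I \<subseteq> \<Lambda>" unfolding I_def using l0 i by auto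
  have I0: "I \<noteq> {}" unfolding I_def by simp
  have dir: "directed_by F \<Lambda>" using sc by (rule sc_dir)
  obtain Z where Z: "I \<subseteq> Z" "Z \<subseteq> \<Lambda>" "countable Z" "directed_by F Z"
    using dir_closure[OF dir cI IL I0] by blast
  obtain s where s: "is_sup_by F \<Lambda> Z s" "F s = closure (\<Union>(F ` Z))"
    using sc_sup[OF sc Z(2-4)] by blast
  have "s \<in> \<Lambda>" using s unfolding is_sup_by_def by blast
  moreover have "l0 \<in> Z" using Z(1) unfolding I_def by auto
  hence "F l0 \<subseteq> F s" using s(1) unfolding is_sup_by_def by blast
  moreover have "D \<subseteq> F s"
  proof
    fix d assume d: "d \<in> D"
    have "i d n \<in> Z" for n using Z(1) d unfolding I_def by auto
    hence "\<forall>n. u d n \<in> \<Union>(F ` Z)" using ui by blast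
    hence "d \<in> closure (\<Union>(F ` Z))" unfolding closure_sequential using ul[of d] by blast
    thus "d \<in> F s" using s by simp
  qed
  ultimately show ?thesis by blast
qed

lemma cover_sep:
  fixes B :: "'i \<Rightarrow> 'b::metric_space set" and f :: "'a::metric_space \<Rightarrow> 'b"
  assumes sc: "sigma_complete_family B \<Lambda>'" and dense: "closure (\<Union>(B ` \<Lambda>')) = UNIV"
    and clB: "\<forall>l\<in>\<Lambda>'. closed (B l)" and sep: "separable_set S" and cont: "continuous_on UNIV f"
    and l': "l' \<in> \<Lambda>'"
  shows "\<exists>s\<in>\<Lambda>'. B l' \<subseteq> B s \<and> f ` S \<subseteq> B s"
proof -
  obtain D where D: "countable D" "D \<subseteq> S" "S \<subseteq> closure D" using sep unfolding separable_set_def by blast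
  obtain s where s: "s \<in> \<Lambda>'" "B l' \<subseteq> B s" "f ` D \<subseteq> B s"
    using cover_countable[OF sc dense _ l', of "f ` D"] D by blast
  have "f ` closure D \<subseteq> B s"
    by (rule image_closure_subset[OF continuous_on_subset[OF cont]]) (use s clB in auto)
  hence "f ` S \<subseteq> B s" using D by blast
  thus ?thesis using s by blast
qed



lemma chain_directed:
  assumes "\<And>n. F (a n) \<subseteq> F (a (Suc n))"
  shows "directed_by F (range a)"
  unfolding directed_by_def
proof (intro conjI ballI)
  show "range a \<noteq> {}" by simp
next
  fix x y assume "x \<in> range a" "y \<in> range a"
  then obtain i j where ij: "x = a i" "y = a j" by blast
  have m: "F (a n) \<subseteq> F (a m)" if "n \<le> m" for n m
    using lift_Suc_mono_le[of "\<lambda>n. F (a n)", OF assms that] .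
  have "F x \<subseteq> F (a (max i j)) \<and> F y \<subseteq> F (a (max i j))" using m ij by simp
  thus "\<exists>z\<in>range a. F x \<subseteq> F z \<and> F y \<subseteq> F z" by blast
qed

lemma club_gen:
  fixes A :: "'i \<Rightarrow> 'a::topological_space set" and B :: "'j \<Rightarrow> 'b::topological_space set"
  assumes scA: "sigma_complete_family A \<Lambda>" and scB: "sigma_complete_family B \<Lambda>'"
    and l: "\<And>x. \<Psi> (\<Phi> x) = x" and r: "\<And>y. \<Phi> (\<Psi> y) = y"
    and cl: "\<And>S. \<Phi> ` closure S = closure (\<Phi> ` S)"
    and cov1: "\<And>l l'. l \<in> \<Lambda> \<Longrightarrow> l' \<in> \<Lambda>' \<Longrightarrow> \<exists>s'\<in>\<Lambda>'. B l' \<subseteq> B s' \<and> \<Phi> ` A l \<subseteq> B s'"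
    and cov2: "\<And>l l'. l' \<in> \<Lambda>' \<Longrightarrow> l \<in> \<Lambda> \<Longrightarrow> \<exists>s\<in>\<Lambda>. A l \<subseteq> A s \<and> \<Psi> ` B l' \<subseteq> A s"
  shows "club_by A \<Lambda> {l\<in>\<Lambda>. \<exists>l'\<in>\<Lambda>'. \<Phi> ` A l = B l'}"
proof -
  define \<Lambda>0 where "\<Lambda>0 = {l\<in>\<Lambda>. \<exists>l'\<in>\<Lambda>'. \<Phi> ` A l = B l'}"
  have closed: "\<exists>s\<in>\<Lambda>0. is_sup_by A \<Lambda> Z s"
    if Z: "Z \<subseteq> \<Lambda>0" "countable Z" "directed_by A Z" for Z
  proof -
    have ZL: "Z \<subseteq> \<Lambda>" using Z unfolding \<Lambda>0_def by auto
    obtain s where s: "is_sup_by A \<Lambda> Z s" "A s = closure (\<Union>(A ` Z))"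
      using sc_sup[OF scA ZL Z(2,3)] by blast
    define \<phi> where "\<phi> l = (SOME l'. l' \<in> \<Lambda>' \<and> \<Phi> ` A l = B l')" for l
    have \<phi>: "\<phi> z \<in> \<Lambda>' \<and> \<Phi> ` A z = B (\<phi> z)" if "z \<in> Z" for z
    proof -
      have "\<exists>l'. l' \<in> \<Lambda>' \<and> \<Phi> ` A z = B l'" using Z that unfolding \<Lambda>0_def by blast
      thus ?thesis unfolding \<phi>_def by (rule someI_ex)
    qed
    have Z'L: "\<phi> ` Z \<subseteq> \<Lambda>'" using \<phi> by blast
    have Z'c: "countable (\<phi> ` Z)" using Z(2) by simp
    have Z'd: "directed_by B (\<phi> ` Z)" unfolding directed_by_def
    proof (intro conjI ballI)
      show "\<phi> ` Z \<noteq> {}" using Z(3) unfolding directed_by_def by simp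
    next
      fix x' y' assume "x' \<in> \<phi> ` Z" "y' \<in> \<phi> ` Z"
      then obtain x y where xy: "x \<in> Z" "y \<in> Z" "x' = \<phi> x" "y' = \<phi> y" by blast
      then obtain z where z: "z \<in> Z" "A x \<subseteq> A z" "A y \<subseteq> A z" using Z(3) unfolding directed_by_def by blast
      have "B x' \<subseteq> B (\<phi> z)" using \<phi>[OF xy(1)] \<phi>[OF z(1)] z(2) xy(3) by (metis image_mono)
      moreover have "B y' \<subseteq> B (\<phi> z)" using \<phi>[OF xy(2)] \<phi>[OF z(1)] z(3) xy(4) by (metis image_mono)
      ultimately show "\<exists>z'\<in>\<phi> ` Z. B x' \<subseteq> B z' \<and> B y' \<subseteq> B z'" using z(1) by blast
    qed
    obtain s' where s': "is_sup_by B \<Lambda>' (\<phi> ` Z) s'" "B s' = closure (\<Union>(B ` \<phi> ` Z))"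
      using sc_sup[OF scB Z'L Z'c Z'd] by blast
    have "\<Union>(B ` \<phi> ` Z) = \<Phi> ` \<Union>(A ` Z)"
    proof -
      have "\<Union>(B ` \<phi> ` Z) = (\<Union>z\<in>Z. B (\<phi> z))" by auto
      also have "\<dots> = (\<Union>z\<in>Z. \<Phi> ` A z)" using \<phi> by auto
      also have "\<dots> = \<Phi> ` \<Union>(A ` Z)" by auto
      finally show ?thesis .
    qed
    hence "B s' = \<Phi> ` A s" using s'(2) s(2) cl by simp
    moreover have "s' \<in> \<Lambda>'" "s \<in> \<Lambda>" using s'(1) s(1) unfolding is_sup_by_def by auto
    ultimately have "s \<in> \<Lambda>0" unfolding \<Lambda>0_def by auto
    thus ?thesis using s(1) by blast
  qed
  have cofinal: "\<exists>m\<in>\<Lambda>0. A l \<subseteq> A m" if lL: "l \<in> \<Lambda>" for l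
  proof -
    obtain l'0 where l'0: "l'0 \<in> \<Lambda>'" using sc_dir[OF scB] unfolding directed_by_def by blast
    define f1 where "f1 \<nu> \<nu>' = (SOME s'. s' \<in> \<Lambda>' \<and> B \<nu>' \<subseteq> B s' \<and> \<Phi> ` A \<nu> \<subseteq> B s')" for \<nu> \<nu>'
    define f2 where "f2 \<nu> \<nu>' = (SOME s. s \<in> \<Lambda> \<and> A \<nu> \<subseteq> A s \<and> \<Psi> ` B \<nu>' \<subseteq> A s)" for \<nu> \<nu>'
    have f1: "f1 \<nu> \<nu>' \<in> \<Lambda>' \<and> B \<nu>' \<subseteq> B (f1 \<nu> \<nu>') \<and> \<Phi> ` A \<nu> \<subseteq> B (f1 \<nu> \<nu>')"
      if "\<nu> \<in> \<Lambda>" "\<nu>' \<in> \<Lambda>'" for \<nu> \<nu>'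
    proof -
      have "\<exists>s'. s' \<in> \<Lambda>' \<and> B \<nu>' \<subseteq> B s' \<and> \<Phi> ` A \<nu> \<subseteq> B s'" using cov1[OF that] by blast
      thus ?thesis unfolding f1_def by (rule someI_ex)
    qed
    have f2: "f2 \<nu> \<nu>' \<in> \<Lambda> \<and> A \<nu> \<subseteq> A (f2 \<nu> \<nu>') \<and> \<Psi> ` B \<nu>' \<subseteq> A (f2 \<nu> \<nu>')"
      if "\<nu> \<in> \<Lambda>" "\<nu>' \<in> \<Lambda>'" for \<nu> \<nu>'
    proof -
      have "\<exists>s. s \<in> \<Lambda> \<and> A \<nu> \<subseteq> A s \<and> \<Psi> ` B \<nu>' \<subseteq> A s" using cov2[OF that(2,1)] by blast
      thus ?thesis unfolding f2_def by (rule someI_ex)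
    qed
    define p where "p = rec_nat (l, l'0) (\<lambda>n q. (f2 (fst q) (f1 (fst q) (snd q)), f1 (fst q) (snd q)))"
    define a where "a n = fst (p n)" for n
    define b where "b n = snd (p n)" for n
    have a0: "a 0 = l" and b0: "b 0 = l'0" unfolding a_def b_def p_def by simp_all
    have bS: "b (Suc n) = f1 (a n) (b n)" and aS: "a (Suc n) = f2 (a n) (b (Suc n))" for n
      unfolding a_def b_def p_def by simp_all
    have inv: "a n \<in> \<Lambda> \<and> b n \<in> \<Lambda>'" for n
    proof (induction n)
      case 0 then show ?case using a0 b0 lL l'0 by simp
    next
      case (Suc n)
      have "b (Suc n) \<in> \<Lambda>'" using f1[of "a n" "b n"] Suc bS by simp
      moreover have "a (Suc n) \<in> \<Lambda>" using f2[of "a n" "b (Suc n)"] Suc calculation aS by simp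
      ultimately show ?case by simp
    qed
    have P1: "B (b n) \<subseteq> B (b (Suc n))" "\<Phi> ` A (a n) \<subseteq> B (b (Suc n))" for n
      using f1[of "a n" "b n"] inv[of n] bS[of n] by simp_all
    have P2: "A (a n) \<subseteq> A (a (Suc n))" "\<Psi> ` B (b (Suc n)) \<subseteq> A (a (Suc n))" for n
      using f2[of "a n" "b (Suc n)"] inv[of n] inv[of "Suc n"] aS[of n] by simp_all
    define b' where "b' n = b (Suc n)" for n
    have dA: "directed_by A (range a)" by (rule chain_directed) (rule P2(1))
    have dB: "directed_by B (range b')" unfolding b'_def by (rule chain_directed) (rule P1(1))
    have rA: "range a \<subseteq> \<Lambda>" using inv by auto
    have rB: "range b' \<subseteq> \<Lambda>'" using inv unfolding b'_def by auto
    obtain s where s: "is_sup_by A \<Lambda> (range a) s" "A s = closure (\<Union>(A ` range a))"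
      using sc_sup[OF scA rA _ dA] by blast
    obtain s' where s': "is_sup_by B \<Lambda>' (range b') s'" "B s' = closure (\<Union>(B ` range b'))"
      using sc_sup[OF scB rB _ dB] by blast
    have U: "\<Union>(B ` range b') = \<Phi> ` \<Union>(A ` range a)"
    proof
      show "\<Union>(B ` range b') \<subseteq> \<Phi> ` \<Union>(A ` range a)"
      proof
        fix y assume "y \<in> \<Union>(B ` range b')"
        then obtain n where "y \<in> B (b (Suc n))" unfolding b'_def by blast
        hence "\<Psi> y \<in> A (a (Suc n))" using P2(2)[of n] by blast
        hence "\<Phi> (\<Psi> y) \<in> \<Phi> ` \<Union>(A ` range a)" by blast
        thus "y \<in> \<Phi> ` \<Union>(A ` range a)" by (simp add: r)
      qed
      show "\<Phi> ` \<Union>(A ` range a) \<subseteq> \<Union>(B ` range b')"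
      proof
        fix y assume "y \<in> \<Phi> ` \<Union>(A ` range a)"
        then obtain n x where "x \<in> A (a n)" "y = \<Phi> x" by blast
        hence "y \<in> B (b (Suc n))" using P1(2)[of n] by blast
        thus "y \<in> \<Union>(B ` range b')" unfolding b'_def by blast
      qed
    qed
    have "B s' = \<Phi> ` A s" using s'(2) s(2) U cl by simp
    moreover have "s' \<in> \<Lambda>'" "s \<in> \<Lambda>" using s'(1) s(1) unfolding is_sup_by_def by auto
    ultimately have "s \<in> \<Lambda>0" unfolding \<Lambda>0_def by auto
    moreover have "A l \<subseteq> A s" using s(1) a0 unfolding is_sup_by_def by (metis rangeI)
    ultimately show ?thesis by blast
  qed
  show ?thesis unfolding club_by_def \<Lambda>0_def[symmetric]
    using closed cofinal unfolding \<Lambda>0_def by blast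
qed



lemma sup_unique:
  assumes "inj_on F \<Lambda>" "is_sup_by F \<Lambda> Z s" "is_sup_by F \<Lambda> Z t" shows "s = t"
proof -
  have "F s \<subseteq> F t" "F t \<subseteq> F s" "s \<in> \<Lambda>" "t \<in> \<Lambda>" using assms(2,3) unfolding is_sup_by_def by auto
  thus ?thesis using assms(1) unfolding inj_on_def by blast
qed

lemma club_same:
  fixes A :: "'i \<Rightarrow> 'a::topological_space set" and B :: "'i \<Rightarrow> 'b::topological_space set"
  assumes scA: "sigma_complete_family A \<Lambda>" and scB: "sigma_complete_family B \<Lambda>"
    and ord: "\<And>l m. l \<in> \<Lambda> \<Longrightarrow> m \<in> \<Lambda> \<Longrightarrow> A l \<subseteq> A m \<longleftrightarrow> B l \<subseteq> B m"
    and l: "\<And>x. \<Psi> (\<Phi> x) = x" and r: "\<And>y. \<Phi> (\<Psi> y) = y"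
    and cl: "\<And>S. \<Phi> ` closure S = closure (\<Phi> ` S)"
    and cov1: "\<And>l l'. l \<in> \<Lambda> \<Longrightarrow> l' \<in> \<Lambda> \<Longrightarrow> \<exists>s'\<in>\<Lambda>. B l' \<subseteq> B s' \<and> \<Phi> ` A l \<subseteq> B s'"
    and cov2: "\<And>l l'. l' \<in> \<Lambda> \<Longrightarrow> l \<in> \<Lambda> \<Longrightarrow> \<exists>s\<in>\<Lambda>. A l \<subseteq> A s \<and> \<Psi> ` B l' \<subseteq> A s"
  shows "club_by A \<Lambda> {l\<in>\<Lambda>. \<Phi> ` A l = B l}"
proof -
  define \<Lambda>0 where "\<Lambda>0 = {l\<in>\<Lambda>. \<Phi> ` A l = B l}"
  have transfer: "\<exists>s. is_sup_by A \<Lambda> Z s \<and> A s = closure (\<Union>(A ` Z)) \<and> B s = closure (\<Union>(B ` Z))"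
    if ZL: "Z \<subseteq> \<Lambda>" and Zc: "countable Z" and Zd: "directed_by A Z" for Z
  proof -
    obtain s where s: "is_sup_by A \<Lambda> Z s" "A s = closure (\<Union>(A ` Z))"
      using sc_sup[OF scA ZL Zc Zd] by blast
    have ZdB: "directed_by B Z" using Zd ZL ord unfolding directed_by_def by (meson subsetD)
    obtain t where t: "is_sup_by B \<Lambda> Z t" "B t = closure (\<Union>(B ` Z))"
      using sc_sup[OF scB ZL Zc ZdB] by blast
    have sL: "s \<in> \<Lambda>" using s(1) unfolding is_sup_by_def by blast
    have "is_sup_by B \<Lambda> Z s" unfolding is_sup_by_def
    proof (intro conjI ballI impI sL)
      fix z assume "z \<in> Z" thus "B z \<subseteq> B s" using s(1) ord sL ZL unfolding is_sup_by_def by blast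
    next
      fix u assume uL: "u \<in> \<Lambda>" and h: "\<forall>z\<in>Z. B z \<subseteq> B u"
      hence "\<forall>z\<in>Z. A z \<subseteq> A u" using ord ZL by blast
      hence "A s \<subseteq> A u" using s(1) uL unfolding is_sup_by_def by blast
      thus "B s \<subseteq> B u" using ord sL uL by blast
    qed
    hence "s = t" using sup_unique[OF sc_inj[OF scB] _ t(1)] by blast
    thus ?thesis using s t by blast
  qed
  have closed: "\<exists>s\<in>\<Lambda>0. is_sup_by A \<Lambda> Z s"
    if Z: "Z \<subseteq> \<Lambda>0" "countable Z" "directed_by A Z" for Z
  proof -
    have ZL: "Z \<subseteq> \<Lambda>" using Z unfolding \<Lambda>0_def by auto
    obtain s where s: "is_sup_by A \<Lambda> Z s" "A s = closure (\<Union>(A ` Z))" "B s = closure (\<Union>(B ` Z))"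
      using transfer[OF ZL Z(2,3)] by blast
    have "\<Union>(B ` Z) = \<Phi> ` \<Union>(A ` Z)"
    proof -
      have "\<And>z. z \<in> Z \<Longrightarrow> B z = \<Phi> ` A z" using Z(1) unfolding \<Lambda>0_def by auto
      hence "\<Union>(B ` Z) = (\<Union>z\<in>Z. \<Phi> ` A z)" by simp
      also have "\<dots> = \<Phi> ` \<Union>(A ` Z)" by auto
      finally show ?thesis .
    qed
    hence "B s = \<Phi> ` A s" using s(2,3) cl by simp
    moreover have "s \<in> \<Lambda>" using s(1) unfolding is_sup_by_def by auto
    ultimately have "s \<in> \<Lambda>0" unfolding \<Lambda>0_def by auto
    thus ?thesis using s(1) by blast
  qed
  have cofinal: "\<exists>m\<in>\<Lambda>0. A l \<subseteq> A m" if lL: "l \<in> \<Lambda>" for l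
  proof -
    have gex: "\<exists>u. u \<in> \<Lambda> \<and> A \<nu> \<subseteq> A u \<and> \<Phi> ` A \<nu> \<subseteq> B u \<and> \<Psi> ` B \<nu> \<subseteq> A u" if \<nu>L: "\<nu> \<in> \<Lambda>" for \<nu>
    proof -
      obtain s' where s': "s' \<in> \<Lambda>" "B \<nu> \<subseteq> B s'" "\<Phi> ` A \<nu> \<subseteq> B s'" using cov1[OF \<nu>L \<nu>L] by blast
      obtain s where s: "s \<in> \<Lambda>" "A \<nu> \<subseteq> A s" "\<Psi> ` B \<nu> \<subseteq> A s" using cov2[OF \<nu>L \<nu>L] by blast
      have dd: "\<forall>x\<in>\<Lambda>. \<forall>y\<in>\<Lambda>. \<exists>z\<in>\<Lambda>. A x \<subseteq> A z \<and> A y \<subseteq> A z"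
        using sc_dir[OF scA] unfolding directed_by_def by blast
      obtain u where u: "u \<in> \<Lambda>" "A s \<subseteq> A u" "A s' \<subseteq> A u"
        using bspec[OF bspec[OF dd s(1)] s'(1)] by blast
      have "B s' \<subseteq> B u" using ord[OF s'(1) u(1)] u(3) by simp
      hence "\<Phi> ` A \<nu> \<subseteq> B u" using s'(3) by (rule subset_trans[rotated])
      moreover have "\<Psi> ` B \<nu> \<subseteq> A u" using s(3) u(2) by (rule subset_trans)
      moreover have "A \<nu> \<subseteq> A u" using s(2) u(2) by (rule subset_trans)
      ultimately show ?thesis using u(1) by blast
    qed
    define g where "g \<nu> = (SOME u. u \<in> \<Lambda> \<and> A \<nu> \<subseteq> A u \<and> \<Phi> ` A \<nu> \<subseteq> B u \<and> \<Psi> ` B \<nu> \<subseteq> A u)" for \<nu>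
    have g: "g \<nu> \<in> \<Lambda> \<and> A \<nu> \<subseteq> A (g \<nu>) \<and> \<Phi> ` A \<nu> \<subseteq> B (g \<nu>) \<and> \<Psi> ` B \<nu> \<subseteq> A (g \<nu>)"
      if "\<nu> \<in> \<Lambda>" for \<nu>
      unfolding g_def by (rule someI_ex[OF gex[OF that]])
    define a where "a n = (g ^^ n) l" for n
    have aS: "a (Suc n) = g (a n)" for n unfolding a_def by simp
    have a0: "a 0 = l" unfolding a_def by simp
    have aL: "a n \<in> \<Lambda>" for n
    proof (induction n)
      case 0 show ?case using lL a0 by simp
    next
      case (Suc n) show ?case unfolding aS using g[OF Suc] by blast
    qed
    have P: "A (a n) \<subseteq> A (a (Suc n))" "\<Phi> ` A (a n) \<subseteq> B (a (Suc n))" "\<Psi> ` B (a n) \<subseteq> A (a (Suc n))" for n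
      using g[OF aL[of n]] aS[of n] by simp_all
    have dA: "directed_by A (range a)" by (rule chain_directed) (rule P(1))
    have rA: "range a \<subseteq> \<Lambda>" using aL by auto
    obtain s where s: "is_sup_by A \<Lambda> (range a) s" "A s = closure (\<Union>(A ` range a))"
      "B s = closure (\<Union>(B ` range a))"
      using transfer[OF rA _ dA] by blast
    have U: "\<Union>(B ` range a) = \<Phi> ` \<Union>(A ` range a)"
    proof
      show "\<Union>(B ` range a) \<subseteq> \<Phi> ` \<Union>(A ` range a)"
      proof
        fix y assume "y \<in> \<Union>(B ` range a)"
        then obtain n where "y \<in> B (a n)" by blast
        hence "\<Psi> y \<in> A (a (Suc n))" using P(3)[of n] by blast
        hence "\<Phi> (\<Psi> y) \<in> \<Phi> ` \<Union>(A ` range a)" by blast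
        thus "y \<in> \<Phi> ` \<Union>(A ` range a)" by (simp add: r)
      qed
      show "\<Phi> ` \<Union>(A ` range a) \<subseteq> \<Union>(B ` range a)"
      proof
        fix y assume "y \<in> \<Phi> ` \<Union>(A ` range a)"
        then obtain n x where "x \<in> A (a n)" "y = \<Phi> x" by blast
        hence "y \<in> B (a (Suc n))" using P(2)[of n] by blast
        thus "y \<in> \<Union>(B ` range a)" by blast
      qed
    qed
    have "B s = \<Phi> ` A s" using s(2,3) U cl by simp
    moreover have "s \<in> \<Lambda>" using s(1) unfolding is_sup_by_def by auto
    ultimately have "s \<in> \<Lambda>0" unfolding \<Lambda>0_def by auto
    moreover have "A l \<subseteq> A s" using s(1) a0 unfolding is_sup_by_def by (metis rangeI)
    ultimately show ?thesis by blast
  qed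
  show ?thesis unfolding club_by_def \<Lambda>0_def[symmetric]
    using closed cofinal unfolding \<Lambda>0_def by blast
qed



theorem proposition2p12:
  fixes \<Phi> :: "'a::cstar_algebra \<Rightarrow> 'b::cstar_algebra"
    and A :: "'i \<Rightarrow> 'a set" and B :: "'i \<Rightarrow> 'b set"
    and \<Lambda> \<Lambda>' :: "'i set"
  assumes A_fam: "sigma_complete_family A \<Lambda>"
    and A_sub: "\<forall>l\<in>\<Lambda>. cstar_subalgebra (A l) \<and> separable_set (A l)"
    and A_dense: "closure (\<Union>(A ` \<Lambda>)) = UNIV"
    and B_fam: "sigma_complete_family B \<Lambda>'"
    and B_sub: "\<forall>l\<in>\<Lambda>'. cstar_subalgebra (B l) \<and> separable_set (B l)"
    and B_dense: "closure (\<Union>(B ` \<Lambda>')) = UNIV"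
    and iso: "star_isomorphism \<Phi>"
  shows "(\<exists>\<Lambda>0 \<Lambda>0' \<phi>. club_by A \<Lambda> \<Lambda>0 \<and> club_by B \<Lambda>' \<Lambda>0' \<and> bij_betw \<phi> \<Lambda>0 \<Lambda>0'
            \<and> (\<forall>l\<in>\<Lambda>0. \<forall>m\<in>\<Lambda>0. A l \<subseteq> A m \<longleftrightarrow> B (\<phi> l) \<subseteq> B (\<phi> m))
            \<and> (\<forall>l\<in>\<Lambda>0. \<Phi> ` A l = B (\<phi> l)))
       \<and> ((\<Lambda> = \<Lambda>' \<and> (\<forall>l\<in>\<Lambda>. \<forall>m\<in>\<Lambda>. A l \<subseteq> A m \<longleftrightarrow> B l \<subseteq> B m)) \<longrightarrow>
           (\<exists>\<Lambda>0. club_by A \<Lambda> \<Lambda>0 \<and> (\<forall>l\<in>\<Lambda>0. \<Phi> ` A l = B l)))"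
proof -
  define \<Psi> where "\<Psi> = inv \<Phi>"
  have bij: "bij \<Phi>" using iso unfolding star_isomorphism_def by simp
  have inj: "inj \<Phi>" using bij by (rule bij_is_inj)
  have l: "\<And>x. \<Psi> (\<Phi> x) = x" unfolding \<Psi>_def using inj by simp
  have r: "\<And>y. \<Phi> (\<Psi> y) = y" unfolding \<Psi>_def using bij by (simp add: bij_is_surj surj_f_inv_f)
  have isoP: "star_isomorphism \<Psi>" unfolding \<Psi>_def by (rule star_inv[OF iso])
  have clP: "\<And>S. \<Phi> ` closure S = closure (\<Phi> ` S)" by (rule star_closure[OF iso])
  have clQ: "\<And>S. \<Psi> ` closure S = closure (\<Psi> ` S)" by (rule star_closure[OF isoP])
  have contP: "continuous_on UNIV \<Phi>" by (rule star_cont[OF iso])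
  have contQ: "continuous_on UNIV \<Psi>" by (rule star_cont[OF isoP])
  have clA: "\<forall>l\<in>\<Lambda>. closed (A l)" using A_sub unfolding cstar_subalgebra_def by blast
  have clB: "\<forall>l\<in>\<Lambda>'. closed (B l)" using B_sub unfolding cstar_subalgebra_def by blast
  have cov1: "\<exists>s'\<in>\<Lambda>'. B l' \<subseteq> B s' \<and> \<Phi> ` A l \<subseteq> B s'" if "l \<in> \<Lambda>" "l' \<in> \<Lambda>'" for l l'
    using cover_sep[OF B_fam B_dense clB _ contP that(2)] A_sub that(1) by blast
  have cov2: "\<exists>s\<in>\<Lambda>. A l \<subseteq> A s \<and> \<Psi> ` B l' \<subseteq> A s" if "l' \<in> \<Lambda>'" "l \<in> \<Lambda>" for l l'
    using cover_sep[OF A_fam A_dense clA _ contQ that(2)] B_sub that(1) by blast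
  define \<Lambda>0 where "\<Lambda>0 = {l\<in>\<Lambda>. \<exists>l'\<in>\<Lambda>'. \<Phi> ` A l = B l'}"
  define \<Lambda>0' where "\<Lambda>0' = {l'\<in>\<Lambda>'. \<exists>l\<in>\<Lambda>. \<Phi> ` A l = B l'}"
  have club1: "club_by A \<Lambda> \<Lambda>0" unfolding \<Lambda>0_def
    by (rule club_gen[OF A_fam B_fam l r clP cov1 cov2])
  have club2': "club_by B \<Lambda>' {l'\<in>\<Lambda>'. \<exists>l\<in>\<Lambda>. \<Psi> ` B l' = A l}"
    by (rule club_gen[OF B_fam A_fam r l clQ cov2 cov1])
  have eqv: "\<Psi> ` B l' = A l \<longleftrightarrow> \<Phi> ` A l = B l'" for l l'
  proof
    assume "\<Psi> ` B l' = A l"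
    hence "\<Phi> ` \<Psi> ` B l' = \<Phi> ` A l" by simp
    thus "\<Phi> ` A l = B l'" by (simp add: image_comp comp_def r)
  next
    assume "\<Phi> ` A l = B l'"
    hence "\<Psi> ` \<Phi> ` A l = \<Psi> ` B l'" by simp
    thus "\<Psi> ` B l' = A l" by (simp add: image_comp comp_def l)
  qed
  have club2: "club_by B \<Lambda>' \<Lambda>0'" using club2' unfolding \<Lambda>0'_def eqv .
  define \<phi> where "\<phi> l = (SOME l'. l' \<in> \<Lambda>' \<and> \<Phi> ` A l = B l')" for l
  have \<phi>: "\<phi> l \<in> \<Lambda>' \<and> \<Phi> ` A l = B (\<phi> l)" if "l \<in> \<Lambda>0" for l
  proof -
    have "\<exists>l'. l' \<in> \<Lambda>' \<and> \<Phi> ` A l = B l'" using that unfolding \<Lambda>0_def by blast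
    thus ?thesis unfolding \<phi>_def by (rule someI_ex)
  qed
  have injA: "inj_on A \<Lambda>" by (rule sc_inj[OF A_fam])
  have injB: "inj_on B \<Lambda>'" by (rule sc_inj[OF B_fam])
  have ord: "A l \<subseteq> A m \<longleftrightarrow> B (\<phi> l) \<subseteq> B (\<phi> m)" if "l \<in> \<Lambda>0" "m \<in> \<Lambda>0" for l m
  proof -
    have "A l \<subseteq> A m \<longleftrightarrow> \<Phi> ` A l \<subseteq> \<Phi> ` A m" using inj by (simp add: inj_image_subset_iff)
    thus ?thesis using \<phi>[OF that(1)] \<phi>[OF that(2)] by simp
  qed
  have "inj_on \<phi> \<Lambda>0"
  proof (rule inj_onI)
    fix l m assume lm: "l \<in> \<Lambda>0" "m \<in> \<Lambda>0" "\<phi> l = \<phi> m"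
    hence "\<Phi> ` A l = \<Phi> ` A m" using \<phi>[OF lm(1)] \<phi>[OF lm(2)] by simp
    hence "A l = A m" using inj by (simp add: inj_image_eq_iff)
    moreover have "l \<in> \<Lambda>" "m \<in> \<Lambda>" using lm unfolding \<Lambda>0_def by auto
    ultimately show "l = m" using injA unfolding inj_on_def by blast
  qed
  moreover have "\<phi> ` \<Lambda>0 = \<Lambda>0'"
  proof
    show "\<phi> ` \<Lambda>0 \<subseteq> \<Lambda>0'" using \<phi> unfolding \<Lambda>0'_def \<Lambda>0_def by fastforce
  next
    show "\<Lambda>0' \<subseteq> \<phi> ` \<Lambda>0"
    proof
      fix l' assume "l' \<in> \<Lambda>0'"
      then obtain l where l': "l' \<in> \<Lambda>'" "l \<in> \<Lambda>" "\<Phi> ` A l = B l'" unfolding \<Lambda>0'_def by blast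
      hence lL0: "l \<in> \<Lambda>0" unfolding \<Lambda>0_def by blast
      have "B (\<phi> l) = B l'" using \<phi>[OF lL0] l' by simp
      hence "\<phi> l = l'" using injB \<phi>[OF lL0] l'(1) unfolding inj_on_def by blast
      thus "l' \<in> \<phi> ` \<Lambda>0" using lL0 by blast
    qed
  qed
  ultimately have bb: "bij_betw \<phi> \<Lambda>0 \<Lambda>0'" unfolding bij_betw_def by blast
  have part1: "\<exists>\<Lambda>0 \<Lambda>0' \<phi>. club_by A \<Lambda> \<Lambda>0 \<and> club_by B \<Lambda>' \<Lambda>0' \<and> bij_betw \<phi> \<Lambda>0 \<Lambda>0'
            \<and> (\<forall>l\<in>\<Lambda>0. \<forall>m\<in>\<Lambda>0. A l \<subseteq> A m \<longleftrightarrow> B (\<phi> l) \<subseteq> B (\<phi> m))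
            \<and> (\<forall>l\<in>\<Lambda>0. \<Phi> ` A l = B (\<phi> l))"
    using club1 club2 bb ord \<phi> by blast
  have part2: "\<exists>\<Lambda>0. club_by A \<Lambda> \<Lambda>0 \<and> (\<forall>l\<in>\<Lambda>0. \<Phi> ` A l = B l)"
    if eq: "\<Lambda> = \<Lambda>'" and o: "\<forall>l\<in>\<Lambda>. \<forall>m\<in>\<Lambda>. A l \<subseteq> A m \<longleftrightarrow> B l \<subseteq> B m"
  proof -
    have B_fam': "sigma_complete_family B \<Lambda>" using B_fam eq by simp
    have o': "\<And>l m. l \<in> \<Lambda> \<Longrightarrow> m \<in> \<Lambda> \<Longrightarrow> A l \<subseteq> A m \<longleftrightarrow> B l \<subseteq> B m" using o by blast
    have cov1': "\<exists>s'\<in>\<Lambda>. B l' \<subseteq> B s' \<and> \<Phi> ` A l \<subseteq> B s'" if "l \<in> \<Lambda>" "l' \<in> \<Lambda>" for l l'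
      using cov1[of l l'] that eq by simp
    have cov2': "\<exists>s\<in>\<Lambda>. A l \<subseteq> A s \<and> \<Psi> ` B l' \<subseteq> A s" if "l' \<in> \<Lambda>" "l \<in> \<Lambda>" for l l'
      using cov2[of l' l] that eq by simp
    have "club_by A \<Lambda> {l\<in>\<Lambda>. \<Phi> ` A l = B l}"
      by (rule club_same[OF A_fam B_fam' o' l r clP cov1' cov2'])
    thus ?thesis by blast
  qed
  show ?thesis using part1 part2 by blast
qed


end
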